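(* Let $\xi\in\Xi^*_{T1}$. Then there exist a distribution $\mu_1\in\Delta(\Pi_{T1})$ and a single plan $\pi_2\in\Pi_{T2}$ such that $\xi=f(\mu_1\otimes\delta_{\pi_2})$, where $\delta_{\pi_2}$ is the point mass at $\pi_2$; moreover $\xi[\varnothing,\sigma_{T2}]=1$ if $\pi_2\in\Pi_{T2}(\sigma_{T2})$ and $0$ otherwise. Symmetrically, for $\xi\in\Xi^*_{T2}$ there exist $\pi_1\in\Pi_{T1}$ and $\mu_2\in\Delta(\Pi_{T2})$ with $\xi=f(\delta_{\pi_1}\otimes\mu_2)$.
   Context: A finite extensive-form game is played on a tree; each internal node belongs to one of the players $T1,T2,O$ or to chance. The nodes of player $i$ are partitioned into information sets $\mathcal I_i$; all nodes of $I\in\mathcal I_i$ share the action set $A_I$. Perfect recall is assumed. The sequences of player $i$ are $\Sigma_i=\{(I,a):I\in\mathcal I_i,a\in A_I\}\cup\{\varnothing\}$. For an information set $I$ of player $i$, $\sigma(I)$ denotes the last pair $(I',a')$ of player $i$ on the root-to-$I$ path, or $\varnothing$ if $i$ does not act before $I$. Two information sets $I_i\in\mathcal I_i$, $I_j\in\mathcal I_j$ are connected ($I_i\rightleftharpoons I_j$) if there exist $v\in I_i$, $w\in I_j$ such that the root-to-$v$ path passes through $w$ or vice versa. A pair $(\sigma_i,\sigma_j)$ is relevant ($\sigma_i\bowtie\sigma_j$) if one of them is $\varnothing$ or $\sigma_i=(I_i,a_i)$, $\sigma_j=(I_j,a_j)$ with $I_i\rightleftharpoons I_j$; $\Sigma_{T1}\bowtie\Sigma_{T2}$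 is the set of relevant pairs. Similarly $\sigma_i\bowtie I_j$ if $\sigma_i=\varnothing$ or $\sigma_i=(I_i,a_i)$ with $I_i\rightleftharpoons I_j$. A reduced-normal-form plan of player $i$ chooses an action at every information set of $i$ that remains reachable given the plan's own choices; their set is $\Pi_i$. For $\sigma=(I,a)$, $\Pi_i(\sigma)$ is the set of plans prescribing all of $i$'s actions on the path to $I$ and playing $a$ at $I$; $\Pi_i(\varnothing)=\Pi_i$. For $\mu_1\in\Delta(\Pi_{T1}),\mu_2\in\Delta(\Pi_{T2})$, $\mu_1\otimes\mu_2$ is the product distribution $(\pi_1,\pi_2)\mapsto\mu_1(\pi_1)\mu_2(\pi_2)$. The map $f$ sends $\mu_T\in\Delta(\Pi_{T1}\times\Pi_{T2})$ to the vector $f(\mu_T)$ indexed by relevant pairs with $f(\mu_T)[\sigma_{T1},\sigma_{T2}]=\sum_{\pi_1\in\Pi_{T1}(\sigma_{T1}),\pi_2\in\Pi_{T2}(\sigma_{T2})}\mu_T(\pi_1,\pi_2)$. The von Stengel–Forges polytope $\mathcal V_T$ is the set of nonnegative vectors $\xi$ indexed by relevant pairs with: $\xi[\varnothing,\varnothing]=1$; $\sum_{a\in A_{I}}\xi[(I,a),\sigma_{T2}]=\xi[\sigma(I),\sigma_{T2}]$ for all $I\in\mathcal I_{T1}$, $\sigma_{T2}\in\Sigma_{T2}$ with $I\bowtie\sigma_{T2}$; $\sum_{b\in A_{J}}\xi[\sigma_{T1},(J,b)]=\xi[\sigma_{T1},\sigma(J)]$ for all $J\in\mathcal I_{T2}$,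 $\sigma_{T1}\in\Sigma_{T1}$ with $\sigma_{T1}\bowtie J$. The semi-randomized correlation plans are $\Xi^*_{T1}=\{\xi\in\mathcal V_T:\xi[\varnothing,\sigma_{T2}]\in\{0,1\}\ \forall\sigma_{T2}\in\Sigma_{T2}\}$ and $\Xi^*_{T2}=\{\xi\in\mathcal V_T:\xi[\sigma_{T1},\varnothing]\in\{0,1\}\ \forall\sigma_{T1}\in\Sigma_{T1}\}$. *)

theory Defs
  imports "HOL-Probability.Probability"
begin

datatype plr = T1 | T2 | O | Chance

text \<open>A game tree is a finite prefix-closed set H of histories (lists of actions);
  the root is []. pl h is the player to move at h, ifs h the label of the information
  set containing h.\<close>

definition internal :: "'a list set \<Rightarrow> 'a list \<Rightarrow> bool" where
  "internal H h \<longleftrightarrow> h \<in> H \<and> (\<exists>a. h @ [a] \<in> H)"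

definition acts :: "'a list set \<Rightarrow> 'a list \<Rightarrow> 'a set" where
  "acts H h = {a. h @ [a] \<in> H}"

definition nodes :: "'a list set \<Rightarrow> ('a list \<Rightarrow> 'i) \<Rightarrow> 'i \<Rightarrow> 'a list set" where
  "nodes H ifs I = {h. internal H h \<and> ifs h = I}"

definition Isets :: "'a list set \<Rightarrow> ('a list \<Rightarrow> plr) \<Rightarrow> ('a list \<Rightarrow> 'i) \<Rightarrow> plr \<Rightarrow> 'i set" where
  "Isets H pl ifs i = ifs ` {h. internal H h \<and> pl h = i}"

text \<open>Action set A_I (all nodes of I share it)\<close>
definition AI :: "'a list set \<Rightarrow> ('a list \<Rightarrow> 'i) \<Rightarrow> 'i \<Rightarrow> 'a set" where
  "AI H ifs I = acts H (SOME h. h \<in> nodes H ifs I)"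

definition seqs :: "('a list \<Rightarrow> plr) \<Rightarrow> ('a list \<Rightarrow> 'i) \<Rightarrow> plr \<Rightarrow> 'a list \<Rightarrow> ('i \<times> 'a) list" where
  "seqs pl ifs i h = map (\<lambda>k. (ifs (take k h), h ! k)) (filter (\<lambda>k. pl (take k h) = i) [0..<length h])"

definition wf_game :: "'a list set \<Rightarrow> ('a list \<Rightarrow> plr) \<Rightarrow> ('a list \<Rightarrow> 'i) \<Rightarrow> bool" where
  "wf_game H pl ifs \<longleftrightarrow>
     finite H \<and> [] \<in> H \<and> (\<forall>h a. h @ [a] \<in> H \<longrightarrow> h \<in> H) \<and>
     (\<forall>h h'. internal H h \<and> internal H h' \<and> ifs h = ifs h' \<longrightarrow>
        pl h = pl h' \<and> acts H h = acts H h') \<and>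
     \<comment> \<open>perfect recall for every (non-chance) player\<close>
     (\<forall>i h h'. i \<noteq> Chance \<and> internal H h \<and> internal H h' \<and> pl h = i \<and> ifs h = ifs h'
        \<longrightarrow> seqs pl ifs i h = seqs pl ifs i h')"

text \<open>A sequence is None (the empty sequence) or Some (I,a).\<close>
type_synonym ('i,'a) sq = "('i \<times> 'a) option"

definition Seqs :: "'a list set \<Rightarrow> ('a list \<Rightarrow> plr) \<Rightarrow> ('a list \<Rightarrow> 'i) \<Rightarrow> plr \<Rightarrow> ('i,'a) sq set" where
  "Seqs H pl ifs i = {None} \<union> {Some (I, a) | I a. I \<in> Isets H pl ifs i \<and> a \<in> AI H ifs I}"

definition parseq :: "'a list set \<Rightarrow> ('a list \<Rightarrow> plr) \<Rightarrow> ('a list \<Rightarrow> 'i) \<Rightarrow> plr \<Rightarrow> 'i \<Rightarrow> ('i,'a) sq" where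
  "parseq H pl ifs i I = (let s = seqs pl ifs i (SOME h. h \<in> nodes H ifs I)
                          in if s = [] then None else Some (last s))"

definition connected :: "'a list set \<Rightarrow> ('a list \<Rightarrow> 'i) \<Rightarrow> 'i \<Rightarrow> 'i \<Rightarrow> bool" where
  "connected H ifs I J \<longleftrightarrow> (\<exists>v \<in> nodes H ifs I. \<exists>w \<in> nodes H ifs J.
      (\<exists>ys. v = w @ ys) \<or> (\<exists>ys. w = v @ ys))"

definition relevant :: "'a list set \<Rightarrow> ('a list \<Rightarrow> plr) \<Rightarrow> ('a list \<Rightarrow> 'i) \<Rightarrow> ('i,'a) sq \<Rightarrow> ('i,'a) sq \<Rightarrow> bool" where
  "relevant H pl ifs s1 s2 \<longleftrightarrow> s1 \<in> Seqs H pl ifs T1 \<and> s2 \<in> Seqs H pl ifs T2 \<and>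
     (case (s1, s2) of (Some (I, _), Some (J, _)) \<Rightarrow> connected H ifs I J | _ \<Rightarrow> True)"

definition rel_seq_iset :: "'a list set \<Rightarrow> ('a list \<Rightarrow> 'i) \<Rightarrow> ('i,'a) sq \<Rightarrow> 'i \<Rightarrow> bool" where
  "rel_seq_iset H ifs s I \<longleftrightarrow> (case s of None \<Rightarrow> True | Some (J, _) \<Rightarrow> connected H ifs J I)"

type_synonym ('i,'a) plan = "'i \<Rightarrow> 'a option"

definition reach :: "'a list set \<Rightarrow> ('a list \<Rightarrow> plr) \<Rightarrow> ('a list \<Rightarrow> 'i) \<Rightarrow> plr \<Rightarrow> ('i,'a) plan \<Rightarrow> 'i \<Rightarrow> bool" where
  "reach H pl ifs i p I \<longleftrightarrow> (\<exists>h \<in> nodes H ifs I. \<forall>(J, b) \<in> set (seqs pl ifs i h). p J = Some b)"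

definition Plans :: "'a list set \<Rightarrow> ('a list \<Rightarrow> plr) \<Rightarrow> ('a list \<Rightarrow> 'i) \<Rightarrow> plr \<Rightarrow> ('i,'a) plan set" where
  "Plans H pl ifs i = {p. \<forall>I. (p I \<noteq> None \<longleftrightarrow> I \<in> Isets H pl ifs i \<and> reach H pl ifs i p I) \<and>
                              (\<forall>a. p I = Some a \<longrightarrow> a \<in> AI H ifs I)}"

definition PlansOf :: "'a list set \<Rightarrow> ('a list \<Rightarrow> plr) \<Rightarrow> ('a list \<Rightarrow> 'i) \<Rightarrow> plr \<Rightarrow> ('i,'a) sq \<Rightarrow> ('i,'a) plan set" where
  "PlansOf H pl ifs i s = (case s of None \<Rightarrow> Plans H pl ifs i
     | Some (I, a) \<Rightarrow> {p \<in> Plans H pl ifs i. reach H pl ifs i p I \<and> p I = Some a})"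

text \<open>The map f from distributions over pairs of plans to vectors indexed by relevant pairs
  (we give its value at every pair; only relevant pairs are used)\<close>
definition fmap :: "'a list set \<Rightarrow> ('a list \<Rightarrow> plr) \<Rightarrow> ('a list \<Rightarrow> 'i) \<Rightarrow>
    (('i,'a) plan \<times> ('i,'a) plan) pmf \<Rightarrow> ('i,'a) sq \<Rightarrow> ('i,'a) sq \<Rightarrow> real" where
  "fmap H pl ifs \<mu> s1 s2 = (\<Sum>p1 \<in> PlansOf H pl ifs T1 s1. \<Sum>p2 \<in> PlansOf H pl ifs T2 s2. pmf \<mu> (p1, p2))"

text \<open>A vector indexed by relevant pairs is represented by a function; only its values
  on relevant pairs matter.\<close>
definition VSF :: "'a list set \<Rightarrow> ('a list \<Rightarrow> plr) \<Rightarrow> ('a list \<Rightarrow> 'i) \<Rightarrow>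
    (('i,'a) sq \<Rightarrow> ('i,'a) sq \<Rightarrow> real) set" where
  "VSF H pl ifs = {\<xi>.
     (\<forall>s1 s2. relevant H pl ifs s1 s2 \<longrightarrow> \<xi> s1 s2 \<ge> 0) \<and>
     \<xi> None None = 1 \<and>
     (\<forall>I \<in> Isets H pl ifs T1. \<forall>s2 \<in> Seqs H pl ifs T2. rel_seq_iset H ifs s2 I \<longrightarrow>
        (\<Sum>a \<in> AI H ifs I. \<xi> (Some (I, a)) s2) = \<xi> (parseq H pl ifs T1 I) s2) \<and>
     (\<forall>J \<in> Isets H pl ifs T2. \<forall>s1 \<in> Seqs H pl ifs T1. rel_seq_iset H ifs s1 J \<longrightarrow>
        (\<Sum>b \<in> AI H ifs J. \<xi> s1 (Some (J, b))) = \<xi> s1 (parseq H pl ifs T2 J))}"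

definition XiStar1 :: "'a list set \<Rightarrow> ('a list \<Rightarrow> plr) \<Rightarrow> ('a list \<Rightarrow> 'i) \<Rightarrow>
    (('i,'a) sq \<Rightarrow> ('i,'a) sq \<Rightarrow> real) set" where
  "XiStar1 H pl ifs = {\<xi> \<in> VSF H pl ifs. \<forall>s2 \<in> Seqs H pl ifs T2. \<xi> None s2 \<in> {0, 1}}"

definition XiStar2 :: "'a list set \<Rightarrow> ('a list \<Rightarrow> plr) \<Rightarrow> ('a list \<Rightarrow> 'i) \<Rightarrow>
    (('i,'a) sq \<Rightarrow> ('i,'a) sq \<Rightarrow> real) set" where
  "XiStar2 H pl ifs = {\<xi> \<in> VSF H pl ifs. \<forall>s1 \<in> Seqs H pl ifs T1. \<xi> s1 None \<in> {0, 1}}"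

end

theory Submission
  imports Defs
begin


lemma seqs_Nil[simp]: "seqs pl ifs i [] = []"
  by (simp add: seqs_def)

lemma seqs_snoc: "seqs pl ifs i (h @ [a]) = seqs pl ifs i h @ (if pl h = i then [(ifs h, a)] else [])"
proof -
  have "map (\<lambda>k. (ifs (take k (h@[a])), (h@[a]) ! k)) (filter (\<lambda>k. pl (take k (h@[a])) = i) [0..<length h])
      = map (\<lambda>k. (ifs (take k h), h ! k)) (filter (\<lambda>k. pl (take k h) = i) [0..<length h])"
  proof -
    have "filter (\<lambda>k. pl (take k (h@[a])) = i) [0..<length h] = filter (\<lambda>k. pl (take k h) = i) [0..<length h]"
      by (rule filter_cong) auto
    moreover have "\<forall>k\<in>set (filter (\<lambda>k. pl (take k h) = i) [0..<length h]).
        (ifs (take k (h@[a])), (h@[a]) ! k) = (ifs (take k h), h ! k)"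
      by (auto simp: nth_append)
    ultimately show ?thesis by (simp cong: map_cong)
  qed
  then show ?thesis by (simp add: seqs_def)
qed

lemma seqs_split:
  "seqs pl ifs i h = xs @ [(J,b)] @ ys \<Longrightarrow>
   \<exists>k<length h. pl (take k h) = i \<and> ifs (take k h) = J \<and> h ! k = b \<and> seqs pl ifs i (take k h) = xs"
proof (induction h arbitrary: ys rule: rev_induct)
  case Nil then show ?case by simp
next
  case (snoc c h)
  show ?case
  proof (cases "pl h = i")
    case False
    then have "seqs pl ifs i h = xs @ [(J,b)] @ ys" using snoc.prems by (simp add: seqs_snoc)
    from snoc.IH[OF this] obtain k where "k<length h" "pl (take k h) = i \<and> ifs (take k h) = J \<and> h ! k = b \<and> seqs pl ifs i (take k h) = xs" by blast
    then show ?thesis by (intro exI[of _ k]) (auto simp: nth_append)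
  next
    case True
    then have eq: "seqs pl ifs i h @ [(ifs h, c)] = xs @ [(J,b)] @ ys" using snoc.prems by (simp add: seqs_snoc)
    show ?thesis
    proof (cases "ys = []")
      case True
      then have "seqs pl ifs i h = xs" "ifs h = J" "c = b" using eq by auto
      then show ?thesis using \<open>pl h = i\<close> by (intro exI[of _ "length h"]) auto
    next
      case False
      then obtain ys' e where "ys = ys' @ [e]" by (metis rev_exhaust)
      then have "seqs pl ifs i h = xs @ [(J,b)] @ ys'" using eq by simp
      from snoc.IH[OF this] obtain k where "k<length h" "pl (take k h) = i \<and> ifs (take k h) = J \<and> h ! k = b \<and> seqs pl ifs i (take k h) = xs" by blast
      then show ?thesis by (intro exI[of _ k]) (auto simp: nth_append)
    qed
  qed
qed

lemma seqs_mem: "(J,b) \<in> set (seqs pl ifs i h) \<Longrightarrow>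
   \<exists>k<length h. pl (take k h) = i \<and> ifs (take k h) = J \<and> h ! k = b \<and> set (seqs pl ifs i (take k h)) \<subseteq> set (seqs pl ifs i h)"
proof -
  assume "(J,b) \<in> set (seqs pl ifs i h)"
  then obtain xs ys where e: "seqs pl ifs i h = xs @ [(J,b)] @ ys" by (metis append_Cons append_Nil split_list)
  from seqs_split[OF this] show ?thesis using e by fastforce
qed

locale game =
  fixes H :: "'a list set" and pl :: "'a list \<Rightarrow> plr" and ifs :: "'a list \<Rightarrow> 'i"
  assumes wf: "wf_game H pl ifs"
begin

lemma finH: "finite H" using wf by (simp add: wf_game_def)

lemma prefix_closed: "xs @ ys \<in> H \<Longrightarrow> xs \<in> H"
proof (induction ys rule: rev_induct)
  case Nil then show ?case by simp
next
  case (snoc y ys) then show ?case using wf unfolding wf_game_def by (metis append_assoc)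
qed

lemma take_internal: "h \<in> H \<Longrightarrow> k < length h \<Longrightarrow> internal H (take k h) \<and> take k h @ [h!k] \<in> H"
proof -
  assume "h \<in> H" "k < length h"
  then have "take (Suc k) h = take k h @ [h!k]" by (simp add: take_Suc_conv_app_nth)
  moreover have "take (Suc k) h \<in> H" using prefix_closed[of "take (Suc k) h" "drop (Suc k) h"] \<open>h \<in> H\<close> by simp
  ultimately show ?thesis unfolding internal_def using prefix_closed by metis
qed

definition nd :: "'i \<Rightarrow> 'a list" where "nd I = (SOME h. h \<in> nodes H ifs I)"
definition L :: "plr \<Rightarrow> 'i \<Rightarrow> ('i \<times> 'a) list" where "L i I = seqs pl ifs i (nd I)"

lemma wf_same: "internal H h \<Longrightarrow> internal H h' \<Longrightarrow> ifs h = ifs h' \<Longrightarrow> pl h = pl h' \<and> acts H h = acts H h'"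
  using wf unfolding wf_game_def by blast

lemma wf_pr: "i \<noteq> Chance \<Longrightarrow> internal H h \<Longrightarrow> internal H h' \<Longrightarrow> pl h = i \<Longrightarrow> ifs h = ifs h' \<Longrightarrow> seqs pl ifs i h = seqs pl ifs i h'"
  using wf unfolding wf_game_def by blast

lemma nd_in: "I \<in> Isets H pl ifs i \<Longrightarrow> nd I \<in> nodes H ifs I \<and> pl (nd I) = i"
proof -
  assume "I \<in> Isets H pl ifs i"
  then obtain h where h: "internal H h" "pl h = i" "ifs h = I" unfolding Isets_def by blast
  then have "h \<in> nodes H ifs I" by (simp add: nodes_def)
  then have n: "nd I \<in> nodes H ifs I" unfolding nd_def by (rule someI[where P="\<lambda>h. h \<in> nodes H ifs I"])
  then have "internal H (nd I)" "ifs (nd I) = I" by (auto simp: nodes_def)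
  then have "pl (nd I) = pl h" using wf_same[of "nd I" h] h by simp
  then show ?thesis using n h by simp
qed

lemma nodes_seqs: "i \<noteq> Chance \<Longrightarrow> I \<in> Isets H pl ifs i \<Longrightarrow> h \<in> nodes H ifs I \<Longrightarrow> seqs pl ifs i h = L i I \<and> pl h = i"
proof -
  assume a: "i \<noteq> Chance" "I \<in> Isets H pl ifs i" "h \<in> nodes H ifs I"
  note n = nd_in[OF a(2)]
  have i1: "internal H h" "ifs h = I" "internal H (nd I)" "ifs (nd I) = I" using a(3) n by (auto simp: nodes_def)
  then have "pl h = i" using wf_same[of h "nd I"] n by simp
  moreover have "seqs pl ifs i h = seqs pl ifs i (nd I)"
    using wf_pr[OF a(1), of h "nd I"] i1 \<open>pl h = i\<close> by simp
  ultimately show ?thesis by (simp add: L_def)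
qed

lemma acts_eq: "h \<in> nodes H ifs I \<Longrightarrow> h' \<in> nodes H ifs I \<Longrightarrow> acts H h = acts H h'"
  using wf_same[of h h'] unfolding nodes_def by simp

lemma AI_eq: "h \<in> nodes H ifs I \<Longrightarrow> AI H ifs I = acts H h"
proof -
  assume h: "h \<in> nodes H ifs I"
  then have "(SOME h. h \<in> nodes H ifs I) \<in> nodes H ifs I" by (rule someI[where P="\<lambda>h. h \<in> nodes H ifs I"])
  then show ?thesis unfolding AI_def using acts_eq h by blast
qed

lemma L_split: "i \<noteq> Chance \<Longrightarrow> I \<in> Isets H pl ifs i \<Longrightarrow> L i I = xs @ [(J,b)] @ ys \<Longrightarrow>
   J \<in> Isets H pl ifs i \<and> L i J = xs \<and> b \<in> AI H ifs J"
proof -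
  assume a: "i \<noteq> Chance" "I \<in> Isets H pl ifs i" "L i I = xs @ [(J,b)] @ ys"
  note n = nd_in[OF a(2)]
  then have hH: "nd I \<in> H" by (simp add: nodes_def internal_def)
  from seqs_split[OF a(3)[unfolded L_def]] obtain k where k: "k < length (nd I)"
    "pl (take k (nd I)) = i" "ifs (take k (nd I)) = J" "nd I ! k = b" "seqs pl ifs i (take k (nd I)) = xs" by blast
  have ti: "internal H (take k (nd I))" "take k (nd I) @ [b] \<in> H" using take_internal[OF hH k(1)] k by auto
  then have tn: "take k (nd I) \<in> nodes H ifs J" using k by (simp add: nodes_def)
  have J: "J \<in> Isets H pl ifs i" using ti k by (auto simp: Isets_def)
  show ?thesis using J nodes_seqs[OF a(1) J tn] k AI_eq[OF tn] ti by (simp add: acts_def)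
qed

lemma L_mem: "i \<noteq> Chance \<Longrightarrow> I \<in> Isets H pl ifs i \<Longrightarrow> (J,b) \<in> set (L i I) \<Longrightarrow>
   J \<in> Isets H pl ifs i \<and> set (L i J) \<subseteq> set (L i I) \<and> length (L i J) < length (L i I) \<and> b \<in> AI H ifs J"
proof -
  assume a: "i \<noteq> Chance" "I \<in> Isets H pl ifs i" "(J,b) \<in> set (L i I)"
  then obtain xs ys where e: "L i I = xs @ [(J,b)] @ ys" by (metis append_Cons append_Nil split_list)
  from L_split[OF a(1,2) e] e show ?thesis by auto
qed

lemma parseq_eq: "parseq H pl ifs i I = (if L i I = [] then None else Some (last (L i I)))"
  by (simp add: parseq_def L_def nd_def Let_def)

lemma reach_iff: "i \<noteq> Chance \<Longrightarrow> I \<in> Isets H pl ifs i \<Longrightarrow>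
   reach H pl ifs i p I \<longleftrightarrow> (\<forall>(J,b)\<in>set (L i I). p J = Some b)"
  unfolding reach_def using nodes_seqs nd_in by metis

end


context game begin

definition RPw :: "plr \<Rightarrow> (('i,'a) sq \<Rightarrow> real) \<Rightarrow> bool" where
 "RPw i x \<longleftrightarrow> (\<forall>s\<in>Seqs H pl ifs i. 0 \<le> x s) \<and>
    (\<forall>I\<in>Isets H pl ifs i. (\<Sum>a\<in>AI H ifs I. x (Some(I,a))) = x (parseq H pl ifs i I))"

definition RP :: "plr \<Rightarrow> (('i,'a) sq \<Rightarrow> real) \<Rightarrow> bool" where
 "RP i x \<longleftrightarrow> RPw i x \<and> x None = 1"

definition dep :: "plr \<Rightarrow> ('i,'a) sq \<Rightarrow> nat" where
 "dep i s = (case s of None \<Rightarrow> 0 | Some (I,a) \<Rightarrow> Suc (length (L i I)))"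

lemma Seqs_Some[simp]: "Some (I,a) \<in> Seqs H pl ifs i \<longleftrightarrow> I \<in> Isets H pl ifs i \<and> a \<in> AI H ifs I"
  by (auto simp: Seqs_def)

lemma Seqs_None[simp]: "None \<in> Seqs H pl ifs i"
  by (auto simp: Seqs_def)

lemma parseq_props: "i \<noteq> Chance \<Longrightarrow> I \<in> Isets H pl ifs i \<Longrightarrow>
   parseq H pl ifs i I \<in> Seqs H pl ifs i \<and> dep i (parseq H pl ifs i I) < dep i (Some (I,a)) \<and>
   (\<forall>J b. parseq H pl ifs i I = Some (J,b) \<longrightarrow> (J,b) \<in> set (L i I) \<and> L i I = L i J @ [(J,b)])"
proof (cases "L i I = []")
  case True
  then show ?thesis by (simp add: parseq_eq dep_def)
next
  case False
  assume a: "i \<noteq> Chance" "I \<in> Isets H pl ifs i"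
  obtain J b where lb: "last (L i I) = (J,b)" by (cases "last (L i I)")
  have e: "L i I = butlast (L i I) @ [(J,b)] @ []" using False lb append_butlast_last_id[of "L i I"] by simp
  note sp = L_split[OF a e]
  show ?thesis using False lb sp e
    by (simp add: parseq_eq dep_def) (metis append.right_neutral e last_in_set)
qed

lemma fin_Isets: "finite (Isets H pl ifs i)"
proof -
  have "Isets H pl ifs i \<subseteq> ifs ` H" by (auto simp: Isets_def internal_def)
  then show ?thesis using finH finite_subset by blast
qed

lemma fin_acts: "finite (acts H h)"
proof -
  have "acts H h = (\<lambda>a. h @ [a]) -` H" by (auto simp: acts_def)
  then show ?thesis using finite_vimageI[OF finH, of "\<lambda>a. h @ [a]"] by (simp add: inj_def)
qed

lemma fin_AI: "finite (AI H ifs I)"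
  unfolding AI_def by (rule fin_acts)

lemma AI_ne: "I \<in> Isets H pl ifs i \<Longrightarrow> AI H ifs I \<noteq> {}"
proof -
  assume "I \<in> Isets H pl ifs i"
  note n = nd_in[OF this]
  then have "internal H (nd I)" by (simp add: nodes_def)
  then obtain a where "nd I @ [a] \<in> H" by (auto simp: internal_def)
  then show ?thesis using AI_eq[of "nd I" I] n by (auto simp: acts_def)
qed

lemma fin_Seqs: "finite (Seqs H pl ifs i)"
proof -
  have "Seqs H pl ifs i \<subseteq> insert None ((\<lambda>(I,a). Some (I,a)) ` Sigma (Isets H pl ifs i) (AI H ifs))"
    by (auto simp: Seqs_def)
  moreover have "finite (Sigma (Isets H pl ifs i) (AI H ifs))" using fin_Isets fin_AI by blast
  ultimately show ?thesis using finite_subset by blast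
qed

lemma fin_Plans: "finite (Plans H pl ifs i)"
proof -
  let ?S = "Isets H pl ifs i"
  let ?F = "PiE ?S (\<lambda>I. insert None (Some ` AI H ifs I))"
  have "finite ?F" using fin_Isets fin_AI by (intro finite_PiE) auto
  moreover have "Plans H pl ifs i \<subseteq> (\<lambda>f I. if I \<in> ?S then f I else None) ` ?F"
  proof
    fix p assume p: "p \<in> Plans H pl ifs i"
    have pa: "\<And>I a. p I = Some a \<Longrightarrow> a \<in> AI H ifs I" and pn: "\<And>I. p I \<noteq> None \<Longrightarrow> I \<in> ?S"
      using p unfolding Plans_def by blast+
    have "p I \<in> insert None (Some ` AI H ifs I)" for I
      using pa[of I] by (cases "p I") auto
    then have "restrict p ?S \<in> ?F" by (simp add: PiE_iff)
    moreover have "p = (\<lambda>I. if I \<in> ?S then restrict p ?S I else None)"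
      using pn by (force simp: fun_eq_iff)
    ultimately show "p \<in> (\<lambda>f I. if I \<in> ?S then f I else None) ` ?F" by blast
  qed
  ultimately show ?thesis using finite_subset by blast
qed

lemma PlansOf_sub: "PlansOf H pl ifs i s \<subseteq> Plans H pl ifs i"
  by (auto simp: PlansOf_def split: option.splits)

lemma fin_PlansOf: "finite (PlansOf H pl ifs i s)"
  using PlansOf_sub fin_Plans finite_subset by blast

lemma RPw_le: "RPw i x \<Longrightarrow> I \<in> Isets H pl ifs i \<Longrightarrow> a \<in> AI H ifs I \<Longrightarrow> x (Some (I,a)) \<le> x (parseq H pl ifs i I)"
proof -
  assume a: "RPw i x" "I \<in> Isets H pl ifs i" "a \<in> AI H ifs I"
  have "x (Some (I,a)) \<le> (\<Sum>a\<in>AI H ifs I. x (Some(I,a)))"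
    using a fin_AI by (intro member_le_sum) (auto simp: RPw_def)
  then show ?thesis using a by (simp add: RPw_def)
qed

lemma RPw_zero: "i \<noteq> Chance \<Longrightarrow> RPw i x \<Longrightarrow> x None = 0 \<Longrightarrow> s \<in> Seqs H pl ifs i \<Longrightarrow> x s = 0"
proof (induction "dep i s" arbitrary: s rule: less_induct)
  case less
  show ?case
  proof (cases s)
    case None then show ?thesis using less by simp
  next
    case (Some p)
    then obtain I a where s: "s = Some (I,a)" by (cases p) auto
    then have Ia: "I \<in> Isets H pl ifs i" "a \<in> AI H ifs I" using less.prems by auto
    note pp = parseq_props[OF less.prems(1) Ia(1), of a]
    have "x (parseq H pl ifs i I) = 0" using less.hyps[of "parseq H pl ifs i I"] pp less.prems s by simp
    moreover have "x s \<le> x (parseq H pl ifs i I)" using RPw_le[OF less.prems(2) Ia] s by simp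
    moreover have "0 \<le> x s" using less.prems by (auto simp: RPw_def)
    ultimately show ?thesis by simp
  qed
qed

lemma R: "i \<noteq> Chance \<Longrightarrow> p \<in> Plans H pl ifs i \<Longrightarrow> I \<in> Isets H pl ifs i \<Longrightarrow>
   p \<in> PlansOf H pl ifs i (parseq H pl ifs i I) \<longleftrightarrow> reach H pl ifs i p I"
proof (cases "L i I = []")
  case True
  assume a: "i \<noteq> Chance" "p \<in> Plans H pl ifs i" "I \<in> Isets H pl ifs i"
  then show ?thesis using True reach_iff[OF a(1,3)] by (simp add: parseq_eq PlansOf_def)
next
  case False
  assume a: "i \<noteq> Chance" "p \<in> Plans H pl ifs i" "I \<in> Isets H pl ifs i"
  obtain J b where lb: "last (L i I) = (J,b)" by (cases "last (L i I)")
  have ps: "parseq H pl ifs i I = Some (J,b)" using False lb by (simp add: parseq_eq)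
  note pp = parseq_props[OF a(1,3), of undefined]
  have J: "J \<in> Isets H pl ifs i" "L i I = L i J @ [(J,b)]" using pp ps L_mem[OF a(1,3)] by auto
  show ?thesis using ps J a reach_iff[OF a(1) J(1)] reach_iff[OF a(1,3)] by (auto simp: PlansOf_def)
qed

lemma ind_RP: "i \<noteq> Chance \<Longrightarrow> p \<in> Plans H pl ifs i \<Longrightarrow> RP i (\<lambda>s. if p \<in> PlansOf H pl ifs i s then 1 else 0)"
proof -
  assume a: "i \<noteq> Chance" "p \<in> Plans H pl ifs i"
  have "(\<Sum>b\<in>AI H ifs I. if p \<in> PlansOf H pl ifs i (Some (I, b)) then 1 else 0) =
        (if p \<in> PlansOf H pl ifs i (parseq H pl ifs i I) then 1 else (0::real))"
    if I: "I \<in> Isets H pl ifs i" for I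
  proof (cases "reach H pl ifs i p I")
    case True
    then obtain c where c: "p I = Some c" "c \<in> AI H ifs I" using a(2) I unfolding Plans_def by blast
    have "(\<Sum>b\<in>AI H ifs I. if p \<in> PlansOf H pl ifs i (Some (I, b)) then 1 else (0::real)) =
          (\<Sum>b\<in>AI H ifs I. if b = c then 1 else 0)"
      using True c a(2) by (intro sum.cong) (auto simp: PlansOf_def)
    also have "\<dots> = 1" using c fin_AI by simp
    finally show ?thesis using R[OF a I] True by simp
  next
    case False
    then show ?thesis using R[OF a I] by (simp add: PlansOf_def)
  qed
  moreover have "p \<in> PlansOf H pl ifs i None" using a by (simp add: PlansOf_def)
  ultimately show ?thesis by (simp add: RP_def RPw_def)
qed

end



lemma sum_pmf_return: "finite A \<Longrightarrow> (\<Sum>q\<in>A. pmf (return_pmf p) q) = (if p \<in> A then 1 else 0)"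
  by (simp add: indicator_def)

lemma sum_ind_return: "finite A \<Longrightarrow> (\<Sum>q\<in>A. indicator {q} p) = (if p \<in> A then 1 else (0::real))"
  by (simp add: indicator_def)

context game begin

lemma exists_plan: "i \<noteq> Chance \<Longrightarrow> RP i x \<Longrightarrow>
  \<exists>p\<in>Plans H pl ifs i. \<forall>s\<in>Seqs H pl ifs i. p \<in> PlansOf H pl ifs i s \<longrightarrow> 0 < x s"
proof -
  assume a: "i \<noteq> Chance" "RP i x"
  define c where "c I = (SOME a. a \<in> AI H ifs I \<and> (0 < x (parseq H pl ifs i I) \<longrightarrow> 0 < x (Some (I,a))))" for I
  have c: "c I \<in> AI H ifs I \<and> (0 < x (parseq H pl ifs i I) \<longrightarrow> 0 < x (Some (I,c I)))"
    if I: "I \<in> Isets H pl ifs i" for I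
  proof -
    have "\<exists>a. a \<in> AI H ifs I \<and> (0 < x (parseq H pl ifs i I) \<longrightarrow> 0 < x (Some (I,a)))"
    proof (cases "0 < x (parseq H pl ifs i I)")
      case True
      have eq: "(\<Sum>a\<in>AI H ifs I. x (Some(I,a))) = x (parseq H pl ifs i I)" using a(2) I by (simp add: RP_def RPw_def)
      show ?thesis
      proof (rule ccontr)
        assume "\<not> ?thesis"
        then have "\<forall>a\<in>AI H ifs I. x (Some(I,a)) \<le> 0" using True by auto
        then have "(\<Sum>a\<in>AI H ifs I. x (Some(I,a))) \<le> 0" by (intro sum_nonpos) auto
        then show False using eq True by simp
      qed
    next
      case False
      then show ?thesis using AI_ne[OF I] by auto
    qed
    then show ?thesis unfolding c_def by (rule someI_ex)
  qed
  define p where "p I = (if I \<in> Isets H pl ifs i \<and> (\<forall>(J,b)\<in>set (L i I). c J = b) then Some (c I) else None)" for I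
  have reachp: "reach H pl ifs i p I \<longleftrightarrow> (\<forall>(J,b)\<in>set (L i I). c J = b)" if I: "I \<in> Isets H pl ifs i" for I
  proof -
    have "(\<forall>(J,b)\<in>set (L i I). p J = Some b) \<longleftrightarrow> (\<forall>(J,b)\<in>set (L i I). c J = b)"
    proof
      assume h: "\<forall>(J,b)\<in>set (L i I). p J = Some b"
      show "\<forall>(J,b)\<in>set (L i I). c J = b"
      proof (intro ballI, clarify)
        fix J b assume "(J,b) \<in> set (L i I)"
        then have "p J = Some b" using h by blast
        then show "c J = b" unfolding p_def by (auto split: if_splits)
      qed
    next
      assume h: "\<forall>(J,b)\<in>set (L i I). c J = b"
      show "\<forall>(J,b)\<in>set (L i I). p J = Some b"
      proof (intro ballI, clarify)
        fix J b assume Jb: "(J,b) \<in> set (L i I)"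
        note lm = L_mem[OF a(1) I Jb]
        then have "\<forall>(J',b')\<in>set (L i J). c J' = b'" using h by (auto dest: subsetD)
        then show "p J = Some b" using lm h Jb unfolding p_def by auto
      qed
    qed
    then show ?thesis using reach_iff[OF a(1) I] by simp
  qed
  have pP: "p \<in> Plans H pl ifs i"
    unfolding Plans_def
  proof (intro CollectI allI conjI impI)
    fix I
    show "(p I \<noteq> None) = (I \<in> Isets H pl ifs i \<and> reach H pl ifs i p I)"
      using reachp by (auto simp: p_def)
    fix b assume "p I = Some b"
    then show "b \<in> AI H ifs I" using c by (auto simp: p_def split: if_splits)
  qed
  have supp: "s \<in> Seqs H pl ifs i \<Longrightarrow> p \<in> PlansOf H pl ifs i s \<Longrightarrow> 0 < x s" for s
  proof (induction "dep i s" arbitrary: s rule: less_induct)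
    case less
    show ?case
    proof (cases s)
      case None then show ?thesis using a(2) by (simp add: RP_def)
    next
      case (Some q)
      then obtain I b where s: "s = Some (I,b)" by (cases q) auto
      then have Ia: "I \<in> Isets H pl ifs i" "b \<in> AI H ifs I" using less.prems by auto
      have rp: "reach H pl ifs i p I" "p I = Some b" using less.prems s by (auto simp: PlansOf_def)
      then have bc: "b = c I" by (auto simp: p_def split: if_splits)
      note pp = parseq_props[OF a(1) Ia(1), of b]
      have "p \<in> PlansOf H pl ifs i (parseq H pl ifs i I)" using R[OF a(1) pP Ia(1)] rp by simp
      then have "0 < x (parseq H pl ifs i I)" using less.hyps[of "parseq H pl ifs i I"] pp s by simp
      then show ?thesis using c[OF Ia(1)] bc s by simp
    qed
  qed
  show ?thesis using pP supp by blast
qed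

lemma pure: "i \<noteq> Chance \<Longrightarrow> RP i x \<Longrightarrow> p \<in> Plans H pl ifs i \<Longrightarrow>
   (\<forall>s\<in>Seqs H pl ifs i. p \<in> PlansOf H pl ifs i s \<longrightarrow> 1 \<le> x s) \<Longrightarrow>
   s \<in> Seqs H pl ifs i \<Longrightarrow> x s = (if p \<in> PlansOf H pl ifs i s then 1 else 0)"
proof -
  assume a: "i \<noteq> Chance" "RP i x" "p \<in> Plans H pl ifs i"
     "\<forall>s\<in>Seqs H pl ifs i. p \<in> PlansOf H pl ifs i s \<longrightarrow> 1 \<le> x s" "s \<in> Seqs H pl ifs i"
  define d where "d s = (if p \<in> PlansOf H pl ifs i s then 1 else (0::real))" for s
  have dR: "RP i d" unfolding d_def[abs_def] by (rule ind_RP[OF a(1,3)])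
  have "RPw i (\<lambda>s. x s - d s)"
    unfolding RPw_def
  proof (intro conjI ballI)
    fix s assume s: "s \<in> Seqs H pl ifs i"
    have "0 \<le> x s" using a(2) s unfolding RP_def RPw_def by blast
    then show "0 \<le> x s - d s" using a(4) s unfolding d_def by auto
  next
    fix I assume I: "I \<in> Isets H pl ifs i"
    have sx: "(\<Sum>a\<in>AI H ifs I. x (Some (I, a))) = x (parseq H pl ifs i I)"
      using a(2) I unfolding RP_def RPw_def by blast
    have sd: "(\<Sum>a\<in>AI H ifs I. d (Some (I, a))) = d (parseq H pl ifs i I)"
      using dR I unfolding RP_def RPw_def by blast
    show "(\<Sum>a\<in>AI H ifs I. x (Some (I, a)) - d (Some (I, a))) = x (parseq H pl ifs i I) - d (parseq H pl ifs i I)"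
      by (simp only: sum_subtractf sx sd)
  qed
  moreover have "x None - d None = 0" using a(2) dR unfolding RP_def by simp
  ultimately have "x s - d s = 0" by (rule RPw_zero[OF a(1) _ _ a(5)])
  then show ?thesis by (simp add: d_def)
qed

lemma kuhn: "i \<noteq> Chance \<Longrightarrow> RP i x \<Longrightarrow>
  \<exists>\<mu>. set_pmf \<mu> \<subseteq> Plans H pl ifs i \<and> (\<forall>s\<in>Seqs H pl ifs i. (\<Sum>q\<in>PlansOf H pl ifs i s. pmf \<mu> q) = x s)"
proof (induction "card {s\<in>Seqs H pl ifs i. x s \<noteq> 0}" arbitrary: x rule: less_induct)
  case less
  note a = less.prems
  obtain p where p: "p \<in> Plans H pl ifs i" "\<forall>s\<in>Seqs H pl ifs i. p \<in> PlansOf H pl ifs i s \<longrightarrow> 0 < x s"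
    using exists_plan[OF a] by blast
  define d where "d s = (if p \<in> PlansOf H pl ifs i s then 1 else (0::real))" for s
  have dR: "RP i d" unfolding d_def[abs_def] by (rule ind_RP[OF a(1) p(1)])
  let ?A = "{s\<in>Seqs H pl ifs i. p \<in> PlansOf H pl ifs i s}"
  define l where "l = Min (x ` ?A)"
  have finA: "finite (x ` ?A)" using fin_Seqs by simp
  have NA: "None \<in> ?A" using p by (simp add: PlansOf_def)
  have l_le: "l \<le> x s" if "s \<in> ?A" for s using that finA by (simp add: l_def)
  have "l \<in> x ` ?A" unfolding l_def by (intro Min_in finA) (use NA in blast)
  then obtain s0 where s0: "s0 \<in> ?A" "x s0 = l" by auto
  have l0: "0 < l" using s0 p by auto
  have l1: "l \<le> 1" using l_le[OF NA] a(2) by (simp add: RP_def)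
  show ?case
  proof (cases "l = 1")
    case True
    have "x s = d s" if "s \<in> Seqs H pl ifs i" for s
      using pure[OF a p(1) _ that] l_le True by (auto simp: d_def)
    then show ?thesis using p(1) fin_PlansOf by (intro exI[of _ "return_pmf p"]) (simp add: sum_ind_return d_def)
  next
    case False
    then have l1': "l < 1" using l1 by simp
    define y where "y s = (x s - l * d s) / (1 - l)" for s
    have yR: "RP i y" unfolding RP_def RPw_def
    proof (intro conjI ballI)
      fix s assume s: "s \<in> Seqs H pl ifs i"
      have "0 \<le> x s - l * d s"
      proof (cases "p \<in> PlansOf H pl ifs i s")
        case True then show ?thesis using l_le s by (simp add: d_def)
      next
        case False then show ?thesis using a(2) s by (simp add: d_def RP_def RPw_def)
      qed
      then show "0 \<le> y s" using l1' by (simp add: y_def)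
    next
      fix I assume I: "I \<in> Isets H pl ifs i"
      have "(\<Sum>a\<in>AI H ifs I. y (Some (I, a))) =
         ((\<Sum>a\<in>AI H ifs I. x (Some (I, a))) - l * (\<Sum>a\<in>AI H ifs I. d (Some (I, a)))) / (1 - l)"
        by (simp add: y_def sum_divide_distrib[symmetric] sum_subtractf sum_distrib_left)
      also have "\<dots> = y (parseq H pl ifs i I)"
        using a(2) dR I by (simp add: y_def RP_def RPw_def)
      finally show "(\<Sum>a\<in>AI H ifs I. y (Some (I, a))) = y (parseq H pl ifs i I)" .
    next
      show "y None = 1" using a(2) dR l1' by (simp add: y_def RP_def)
    qed
    have sub: "{s\<in>Seqs H pl ifs i. y s \<noteq> 0} \<subset> {s\<in>Seqs H pl ifs i. x s \<noteq> 0}"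
    proof
      show "{s\<in>Seqs H pl ifs i. y s \<noteq> 0} \<subseteq> {s\<in>Seqs H pl ifs i. x s \<noteq> 0}"
        using p(2) by (force simp: y_def d_def)
      have "s0 \<notin> {s\<in>Seqs H pl ifs i. y s \<noteq> 0}" using s0 by (simp add: y_def d_def)
      moreover have "s0 \<in> {s\<in>Seqs H pl ifs i. x s \<noteq> 0}" using s0 l0 by simp
      ultimately show "{s\<in>Seqs H pl ifs i. y s \<noteq> 0} \<noteq> {s\<in>Seqs H pl ifs i. x s \<noteq> 0}" by blast
    qed
    have "card {s\<in>Seqs H pl ifs i. y s \<noteq> 0} < card {s\<in>Seqs H pl ifs i. x s \<noteq> 0}"
      using sub fin_Seqs by (intro psubset_card_mono) auto
    from less.hyps[OF this a(1) yR] obtain \<mu>' where mu': "set_pmf \<mu>' \<subseteq> Plans H pl ifs i"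
      "\<forall>s\<in>Seqs H pl ifs i. (\<Sum>q\<in>PlansOf H pl ifs i s. pmf \<mu>' q) = y s" by blast
    define \<mu> where "\<mu> = bind_pmf (bernoulli_pmf l) (\<lambda>b. if b then return_pmf p else \<mu>')"
    have pm: "pmf \<mu> q = pmf (return_pmf p) q * l + pmf \<mu>' q * (1 - l)" for q
      unfolding \<mu>_def pmf_bind using l0 l1 by simp
    have "set_pmf \<mu> \<subseteq> Plans H pl ifs i" using mu'(1) p(1) by (auto simp: \<mu>_def split: if_splits)
    moreover have "(\<Sum>q\<in>PlansOf H pl ifs i s. pmf \<mu> q) = x s" if s: "s \<in> Seqs H pl ifs i" for s
    proof -
      have "(\<Sum>q\<in>PlansOf H pl ifs i s. pmf \<mu> q) =
            (\<Sum>q\<in>PlansOf H pl ifs i s. pmf (return_pmf p) q) * l + (\<Sum>q\<in>PlansOf H pl ifs i s. pmf \<mu>' q) * (1 - l)"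
        by (simp add: pm sum.distrib sum_distrib_right)
      also have "\<dots> = d s * l + y s * (1 - l)" using mu'(2) s fin_PlansOf by (simp add: sum_ind_return d_def)
      also have "\<dots> = x s" using l1' by (simp add: y_def field_simps)
      finally show ?thesis .
    qed
    ultimately show ?thesis by blast
  qed
qed

end



lemma connected_sym: "connected H ifs I J \<longleftrightarrow> connected H ifs J I"
  unfolding connected_def by blast

context game begin

lemma conn_lemma: "i \<noteq> Chance \<Longrightarrow> I \<in> Isets H pl ifs i \<Longrightarrow> connected H ifs J I \<Longrightarrow>
   (I',a') \<in> set (L i I) \<Longrightarrow> connected H ifs J I'"
proof -
  assume a: "i \<noteq> Chance" "I \<in> Isets H pl ifs i" "connected H ifs J I" "(I',a') \<in> set (L i I)"
  from a(3) obtain v w where vw: "v \<in> nodes H ifs J" "w \<in> nodes H ifs I"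
    "(\<exists>ys. v = w @ ys) \<or> (\<exists>ys. w = v @ ys)" unfolding connected_def by blast
  have "L i I = seqs pl ifs i w" using nodes_seqs[OF a(1,2) vw(2)] by simp
  then have "(I',a') \<in> set (seqs pl ifs i w)" using a(4) by simp
  from seqs_mem[OF this] obtain k where k: "k < length w" "ifs (take k w) = I'" by blast
  have "w \<in> H" using vw(2) by (simp add: nodes_def internal_def)
  then have "internal H (take k w)" using take_internal k by blast
  then have tn: "take k w \<in> nodes H ifs I'" using k by (simp add: nodes_def)
  have "(\<exists>ys. v = take k w @ ys) \<or> (\<exists>ys. take k w = v @ ys)"
  proof (cases "\<exists>ys. v = w @ ys")
    case True
    then obtain ys where "v = w @ ys" by blast
    then have "v = take k w @ (drop k w @ ys)" by simp
    then show ?thesis by blast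
  next
    case False
    then obtain ys where w: "w = v @ ys" using vw(3) by blast
    show ?thesis
    proof (cases "k \<le> length v")
      case True
      then have "take k w = take k v" using w by simp
      then have "v = take k w @ drop k v" by simp
      then show ?thesis by blast
    next
      case False
      then have "take k w = v @ take (k - length v) ys" using w by simp
      then show ?thesis by blast
    qed
  qed
  then show ?thesis unfolding connected_def using vw(1) tn by blast
qed

lemma rel_SS: "relevant H pl ifs (Some (I,a)) (Some (J,b)) \<longleftrightarrow>
   I \<in> Isets H pl ifs T1 \<and> a \<in> AI H ifs I \<and> J \<in> Isets H pl ifs T2 \<and> b \<in> AI H ifs J \<and> connected H ifs I J"
  by (auto simp: relevant_def)

lemma rel_N1: "relevant H pl ifs None s2 \<longleftrightarrow> s2 \<in> Seqs H pl ifs T2"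
  by (auto simp: relevant_def split: option.splits)

lemma rel_N2: "relevant H pl ifs s1 None \<longleftrightarrow> s1 \<in> Seqs H pl ifs T1"
  by (auto simp: relevant_def split: option.splits)

lemma rel_Seqs: "relevant H pl ifs s1 s2 \<Longrightarrow> s1 \<in> Seqs H pl ifs T1 \<and> s2 \<in> Seqs H pl ifs T2"
  by (simp add: relevant_def)

lemma rsi_None[simp]: "rel_seq_iset H ifs None I" by (simp add: rel_seq_iset_def)
lemma rsi_Some[simp]: "rel_seq_iset H ifs (Some (J,b)) I \<longleftrightarrow> connected H ifs J I" by (simp add: rel_seq_iset_def)

lemma rel_par1: "relevant H pl ifs (Some (I,a)) s2 \<Longrightarrow> relevant H pl ifs (parseq H pl ifs T1 I) s2"
proof -
  assume r: "relevant H pl ifs (Some (I,a)) s2"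
  then have I: "I \<in> Isets H pl ifs T1" "s2 \<in> Seqs H pl ifs T2" by (auto simp: relevant_def)
  note pp = parseq_props[of T1 I a, OF _ I(1)]
  show ?thesis
  proof (cases s2)
    case None then show ?thesis using pp by (simp add: rel_N2)
  next
    case (Some q)
    then obtain J b where s2: "s2 = Some (J,b)" by (cases q) auto
    show ?thesis
    proof (cases "parseq H pl ifs T1 I")
      case None then show ?thesis using I s2 by (simp add: rel_N1)
    next
      case (Some q')
      then obtain I' a' where ps: "parseq H pl ifs T1 I = Some (I',a')" by (cases q') auto
      have c: "connected H ifs J I" using r s2 by (simp add: rel_SS connected_sym)
      have "(I',a') \<in> set (L T1 I)" using pp ps by simp
      then have "connected H ifs J I'" using conn_lemma[of T1 I J I' a'] I c by simp
      then show ?thesis using ps s2 pp r by (simp add: rel_SS connected_sym)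
    qed
  qed
qed

lemma rel_par2: "relevant H pl ifs s1 (Some (J,b)) \<Longrightarrow> relevant H pl ifs s1 (parseq H pl ifs T2 J)"
proof -
  assume r: "relevant H pl ifs s1 (Some (J,b))"
  then have J: "J \<in> Isets H pl ifs T2" "s1 \<in> Seqs H pl ifs T1" by (auto simp: relevant_def)
  note pp = parseq_props[of T2 J b, OF _ J(1)]
  show ?thesis
  proof (cases s1)
    case None then show ?thesis using pp by (simp add: rel_N1)
  next
    case (Some q)
    then obtain I a where s1: "s1 = Some (I,a)" by (cases q) auto
    show ?thesis
    proof (cases "parseq H pl ifs T2 J")
      case None then show ?thesis using J s1 by (simp add: rel_N2)
    next
      case (Some q')
      then obtain J' b' where ps: "parseq H pl ifs T2 J = Some (J',b')" by (cases q') auto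
      have c: "connected H ifs I J" using r s1 by (simp add: rel_SS)
      have "(J',b') \<in> set (L T2 J)" using pp ps by simp
      then have "connected H ifs I J'" using conn_lemma[of T2 J I J' b'] J c by simp
      then show ?thesis using ps s1 pp r by (simp add: rel_SS)
    qed
  qed
qed

lemma V_nonneg: "\<xi> \<in> VSF H pl ifs \<Longrightarrow> relevant H pl ifs s1 s2 \<Longrightarrow> 0 \<le> \<xi> s1 s2"
  unfolding VSF_def by blast

lemma V_sum1: "\<xi> \<in> VSF H pl ifs \<Longrightarrow> I \<in> Isets H pl ifs T1 \<Longrightarrow> s2 \<in> Seqs H pl ifs T2 \<Longrightarrow> rel_seq_iset H ifs s2 I \<Longrightarrow>
   (\<Sum>a \<in> AI H ifs I. \<xi> (Some (I, a)) s2) = \<xi> (parseq H pl ifs T1 I) s2"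
  unfolding VSF_def by blast

lemma V_sum2: "\<xi> \<in> VSF H pl ifs \<Longrightarrow> J \<in> Isets H pl ifs T2 \<Longrightarrow> s1 \<in> Seqs H pl ifs T1 \<Longrightarrow> rel_seq_iset H ifs s1 J \<Longrightarrow>
   (\<Sum>b \<in> AI H ifs J. \<xi> s1 (Some (J, b))) = \<xi> s1 (parseq H pl ifs T2 J)"
  unfolding VSF_def by blast

lemma V_one: "\<xi> \<in> VSF H pl ifs \<Longrightarrow> \<xi> None None = 1"
  unfolding VSF_def by blast

lemma rsi_of_rel1: "relevant H pl ifs (Some (I,a)) s2 \<Longrightarrow> rel_seq_iset H ifs s2 I"
  by (cases s2) (auto simp: rel_SS connected_sym)

lemma rsi_of_rel2: "relevant H pl ifs s1 (Some (J,b)) \<Longrightarrow> rel_seq_iset H ifs s1 J"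
  by (cases s1) (auto simp: rel_SS)

lemma M1: "\<xi> \<in> VSF H pl ifs \<Longrightarrow> relevant H pl ifs s1 s2 \<Longrightarrow> \<xi> s1 s2 \<le> \<xi> None s2"
proof (induction "dep T1 s1" arbitrary: s1 rule: less_induct)
  case less
  show ?case
  proof (cases s1)
    case None then show ?thesis by simp
  next
    case (Some q)
    then obtain I a where s1: "s1 = Some (I,a)" by (cases q) auto
    have r: "relevant H pl ifs (Some (I,a)) s2" using less.prems s1 by simp
    have I: "I \<in> Isets H pl ifs T1" "a \<in> AI H ifs I" "s2 \<in> Seqs H pl ifs T2" using r by (auto simp: relevant_def)
    have ra: "relevant H pl ifs (Some (I,a')) s2" if "a' \<in> AI H ifs I" for a'
      using r that by (auto simp: relevant_def split: option.splits)
    have "\<xi> (Some (I,a)) s2 \<le> (\<Sum>a \<in> AI H ifs I. \<xi> (Some (I, a)) s2)"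
      using I(2) fin_AI V_nonneg[OF less.prems(1) ra] by (intro member_le_sum) auto
    also have "\<dots> = \<xi> (parseq H pl ifs T1 I) s2"
      using V_sum1[OF less.prems(1) I(1,3) rsi_of_rel1[OF r]] .
    also have "\<dots> \<le> \<xi> None s2"
      using less.hyps[OF _ less.prems(1) rel_par1[OF r]] parseq_props[of T1 I a, OF _ I(1)] s1 by simp
    finally show ?thesis using s1 by simp
  qed
qed

lemma M2: "\<xi> \<in> VSF H pl ifs \<Longrightarrow> \<pi>2 \<in> Plans H pl ifs T2 \<Longrightarrow>
   (\<forall>s2\<in>Seqs H pl ifs T2. \<xi> None s2 = (if \<pi>2 \<in> PlansOf H pl ifs T2 s2 then 1 else 0)) \<Longrightarrow>
   relevant H pl ifs s1 s2 \<Longrightarrow> \<xi> s1 s2 = \<xi> s1 None * (if \<pi>2 \<in> PlansOf H pl ifs T2 s2 then 1 else 0)"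
proof -
  assume a: "\<xi> \<in> VSF H pl ifs" "\<pi>2 \<in> Plans H pl ifs T2"
    "\<forall>s2\<in>Seqs H pl ifs T2. \<xi> None s2 = (if \<pi>2 \<in> PlansOf H pl ifs T2 s2 then 1 else 0)"
  have zero: "\<xi> s1 s2 = 0" if r: "relevant H pl ifs s1 s2" "\<pi>2 \<notin> PlansOf H pl ifs T2 s2" for s1 s2
  proof -
    have "\<xi> None s2 = 0" using a(3) r rel_Seqs by simp
    then show ?thesis using M1[OF a(1) r(1)] V_nonneg[OF a(1) r(1)] by simp
  qed
  have one: "\<xi> s1 s2 = \<xi> s1 None" if "relevant H pl ifs s1 s2" "\<pi>2 \<in> PlansOf H pl ifs T2 s2" for s1 s2
    using that
  proof (induction "dep T2 s2" arbitrary: s2 rule: less_induct)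
    case less
    show ?case
    proof (cases s2)
      case None then show ?thesis by simp
    next
      case (Some q)
      then obtain J b where s2: "s2 = Some (J,b)" by (cases q) auto
      have r: "relevant H pl ifs s1 (Some (J,b))" using less.prems s2 by simp
      have J: "J \<in> Isets H pl ifs T2" "b \<in> AI H ifs J" "s1 \<in> Seqs H pl ifs T1" using r by (auto simp: relevant_def)
      have rb: "relevant H pl ifs s1 (Some (J,b'))" if "b' \<in> AI H ifs J" for b'
        using r that by (auto simp: relevant_def split: option.splits)
      have pj: "reach H pl ifs T2 \<pi>2 J" "\<pi>2 J = Some b" using less.prems s2 by (auto simp: PlansOf_def)
      have "(\<Sum>b' \<in> AI H ifs J. \<xi> s1 (Some (J, b'))) = (\<Sum>b' \<in> AI H ifs J. if b' = b then \<xi> s1 (Some (J, b)) else 0)"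
      proof (intro sum.cong refl)
        fix b' assume b': "b' \<in> AI H ifs J"
        show "\<xi> s1 (Some (J, b')) = (if b' = b then \<xi> s1 (Some (J, b)) else 0)"
        proof (cases "b' = b")
          case False
          then have "\<pi>2 \<notin> PlansOf H pl ifs T2 (Some (J,b'))" using pj by (auto simp: PlansOf_def)
          then show ?thesis using zero[OF rb[OF b']] False by simp
        qed simp
      qed
      also have "\<dots> = \<xi> s1 (Some (J, b))" using J(2) fin_AI by simp
      finally have e1: "\<xi> s1 (Some (J, b)) = \<xi> s1 (parseq H pl ifs T2 J)"
        using V_sum2[OF a(1) J(1,3) rsi_of_rel2[OF r]] by simp
      have "\<pi>2 \<in> PlansOf H pl ifs T2 (parseq H pl ifs T2 J)" using R[of T2 \<pi>2 J] a(2) J(1) pj by simp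
      then have "\<xi> s1 (parseq H pl ifs T2 J) = \<xi> s1 None"
        using less.hyps[OF _ rel_par2[OF r]] parseq_props[of T2 J b, OF _ J(1)] s2 by simp
      then show ?thesis using e1 s2 by simp
    qed
  qed
  assume r: "relevant H pl ifs s1 s2"
  show ?thesis
  proof (cases "\<pi>2 \<in> PlansOf H pl ifs T2 s2")
    case True then show ?thesis using one[OF r] by simp
  next
    case False then show ?thesis using zero[OF r] by simp
  qed
qed

end


context game begin

lemma part1:
  assumes xi: "\<xi> \<in> XiStar1 H pl ifs"
  shows "\<exists>\<mu>1 \<pi>2.
            set_pmf \<mu>1 \<subseteq> Plans H pl ifs T1 \<and> \<pi>2 \<in> Plans H pl ifs T2 \<and>
            (\<forall>s1 s2. relevant H pl ifs s1 s2 \<longrightarrow>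
               \<xi> s1 s2 = fmap H pl ifs (pair_pmf \<mu>1 (return_pmf \<pi>2)) s1 s2) \<and>
            (\<forall>s2 \<in> Seqs H pl ifs T2.
               \<xi> None s2 = (if \<pi>2 \<in> PlansOf H pl ifs T2 s2 then 1 else 0))"
proof -
  have V: "\<xi> \<in> VSF H pl ifs" and b01: "\<forall>s2\<in>Seqs H pl ifs T2. \<xi> None s2 \<in> {0,1}"
    using xi unfolding XiStar1_def by blast+
  have yR: "RP T2 (\<lambda>s2. \<xi> None s2)" unfolding RP_def RPw_def
  proof (intro conjI ballI)
    fix s assume "s \<in> Seqs H pl ifs T2"
    then show "0 \<le> \<xi> None s" using V_nonneg[OF V] rel_N1 by blast
  next
    fix J assume "J \<in> Isets H pl ifs T2"
    then show "(\<Sum>b\<in>AI H ifs J. \<xi> None (Some (J, b))) = \<xi> None (parseq H pl ifs T2 J)"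
      using V_sum2[OF V _ Seqs_None rsi_None] by blast
  next
    show "\<xi> None None = 1" using V_one[OF V] .
  qed
  obtain \<pi>2 where p2: "\<pi>2 \<in> Plans H pl ifs T2"
      "\<forall>s\<in>Seqs H pl ifs T2. \<pi>2 \<in> PlansOf H pl ifs T2 s \<longrightarrow> 0 < \<xi> None s"
    using exists_plan[of T2, OF _ yR] by auto
  have p21: "\<forall>s\<in>Seqs H pl ifs T2. \<pi>2 \<in> PlansOf H pl ifs T2 s \<longrightarrow> 1 \<le> \<xi> None s"
  proof (intro ballI impI)
    fix s assume "s \<in> Seqs H pl ifs T2" "\<pi>2 \<in> PlansOf H pl ifs T2 s"
    then have "0 < \<xi> None s" "\<xi> None s \<in> {0,1}" using p2(2) b01 by auto
    then show "1 \<le> \<xi> None s" by auto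
  qed
  have yeq: "\<forall>s2 \<in> Seqs H pl ifs T2. \<xi> None s2 = (if \<pi>2 \<in> PlansOf H pl ifs T2 s2 then 1 else 0)"
    using pure[of T2 "\<lambda>s2. \<xi> None s2" \<pi>2, OF _ yR p2(1) p21] by simp
  have xR: "RP T1 (\<lambda>s1. \<xi> s1 None)" unfolding RP_def RPw_def
  proof (intro conjI ballI)
    fix s assume "s \<in> Seqs H pl ifs T1"
    then show "0 \<le> \<xi> s None" using V_nonneg[OF V] rel_N2 by blast
  next
    fix I assume "I \<in> Isets H pl ifs T1"
    then show "(\<Sum>a\<in>AI H ifs I. \<xi> (Some (I, a)) None) = \<xi> (parseq H pl ifs T1 I) None"
      using V_sum1[OF V _ Seqs_None rsi_None] by blast
  next
    show "\<xi> None None = 1" using V_one[OF V] .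
  qed
  obtain \<mu>1 where m1: "set_pmf \<mu>1 \<subseteq> Plans H pl ifs T1"
     "\<forall>s\<in>Seqs H pl ifs T1. (\<Sum>q\<in>PlansOf H pl ifs T1 s. pmf \<mu>1 q) = \<xi> s None"
    using kuhn[of T1, OF _ xR] by auto
  have "\<xi> s1 s2 = fmap H pl ifs (pair_pmf \<mu>1 (return_pmf \<pi>2)) s1 s2" if r: "relevant H pl ifs s1 s2" for s1 s2
  proof -
    have "fmap H pl ifs (pair_pmf \<mu>1 (return_pmf \<pi>2)) s1 s2 =
      (\<Sum>p1 \<in> PlansOf H pl ifs T1 s1. pmf \<mu>1 p1 * (\<Sum>p2 \<in> PlansOf H pl ifs T2 s2. indicator {p2} \<pi>2))"
      unfolding fmap_def by (simp add: pmf_pair sum_distrib_left)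
    also have "\<dots> = (\<Sum>p1 \<in> PlansOf H pl ifs T1 s1. pmf \<mu>1 p1) * (if \<pi>2 \<in> PlansOf H pl ifs T2 s2 then 1 else 0)"
      by (simp add: sum_ind_return fin_PlansOf sum_distrib_right)
    also have "\<dots> = \<xi> s1 None * (if \<pi>2 \<in> PlansOf H pl ifs T2 s2 then 1 else 0)"
      using m1(2) rel_Seqs[OF r] by simp
    also have "\<dots> = \<xi> s1 s2" using M2[OF V p2(1) yeq r] by simp
    finally show ?thesis by simp
  qed
  then show ?thesis using m1(1) p2(1) yeq by blast
qed

end



definition sw :: "plr \<Rightarrow> plr" where "sw x = (case x of T1 \<Rightarrow> T2 | T2 \<Rightarrow> T1 | y \<Rightarrow> y)"

lemma sw_sw[simp]: "sw (sw x) = x" by (cases x) (auto simp: sw_def)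
lemma sw_eq: "sw x = y \<longleftrightarrow> x = sw y" by (metis sw_sw)
lemma sw_simps[simp]: "sw T1 = T2" "sw T2 = T1" "sw Chance = Chance" by (auto simp: sw_def)
lemma sw_Chance: "sw x = Chance \<longleftrightarrow> x = Chance" by (cases x) (auto simp: sw_def)

lemma seqs_sw: "seqs (sw \<circ> pl) ifs i h = seqs pl ifs (sw i) h"
  unfolding seqs_def by (simp add: sw_eq)

lemma Isets_sw: "Isets H (sw \<circ> pl) ifs i = Isets H pl ifs (sw i)"
  unfolding Isets_def by (simp add: sw_eq)

lemma wf_sw: assumes "wf_game H pl ifs" shows "wf_game H (sw \<circ> pl) ifs"
proof -
  have pr: "\<And>i h h'. i \<noteq> Chance \<Longrightarrow> internal H h \<Longrightarrow> internal H h' \<Longrightarrow> pl h = i \<Longrightarrow> ifs h = ifs h'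
        \<Longrightarrow> seqs pl ifs i h = seqs pl ifs i h'"
    using assms unfolding wf_game_def by blast
  have pr': "seqs pl ifs (sw i) h = seqs pl ifs (sw i) h'"
    if "i \<noteq> Chance" "internal H h" "internal H h'" "sw (pl h) = i" "ifs h = ifs h'" for i h h'
    using pr[of "sw i" h h'] that by (simp add: sw_eq sw_Chance)
  have w: "finite H" "[] \<in> H" "\<forall>h a. h@[a] \<in> H \<longrightarrow> h \<in> H"
     "\<forall>h h'. internal H h \<and> internal H h' \<and> ifs h = ifs h' \<longrightarrow> pl h = pl h' \<and> acts H h = acts H h'"
    using assms unfolding wf_game_def by blast+
  have c4: "\<forall>h h'. internal H h \<and> internal H h' \<and> ifs h = ifs h' \<longrightarrow> sw (pl h) = sw (pl h') \<and> acts H h = acts H h'"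
  proof (intro allI impI)
    fix h h' assume "internal H h \<and> internal H h' \<and> ifs h = ifs h'"
    then have "pl h = pl h' \<and> acts H h = acts H h'" using w(4) by blast
    then show "sw (pl h) = sw (pl h') \<and> acts H h = acts H h'" by simp
  qed
  have c5: "\<forall>i h h'. i \<noteq> Chance \<and> internal H h \<and> internal H h' \<and> sw (pl h) = i \<and> ifs h = ifs h' \<longrightarrow>
        seqs pl ifs (sw i) h = seqs pl ifs (sw i) h'" using pr' by blast
  show ?thesis unfolding wf_game_def comp_def seqs_sw[unfolded comp_def] using w(1-3) c4 c5 by blast
qed

lemma Seqs_sw: "Seqs H (sw \<circ> pl) ifs i = Seqs H pl ifs (sw i)"
  unfolding Seqs_def Isets_sw ..

lemma parseq_sw: "parseq H (sw \<circ> pl) ifs i I = parseq H pl ifs (sw i) I"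
  unfolding parseq_def seqs_sw ..

lemma reach_sw: "reach H (sw \<circ> pl) ifs i p I = reach H pl ifs (sw i) p I"
  unfolding reach_def seqs_sw ..

lemma Plans_sw: "Plans H (sw \<circ> pl) ifs i = Plans H pl ifs (sw i)"
  unfolding Plans_def reach_sw Isets_sw ..

lemma PlansOf_sw: "PlansOf H (sw \<circ> pl) ifs i s = PlansOf H pl ifs (sw i) s"
  unfolding PlansOf_def reach_sw Plans_sw ..

lemma relevant_sw: "relevant H (sw \<circ> pl) ifs s2 s1 \<longleftrightarrow> relevant H pl ifs s1 s2"
  unfolding relevant_def Seqs_sw
  by (auto split: option.splits simp: connected_sym)

lemma VSF_sw: "\<xi> \<in> VSF H pl ifs \<Longrightarrow> (\<lambda>a b. \<xi> b a) \<in> VSF H (sw \<circ> pl) ifs"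
  unfolding VSF_def mem_Collect_eq Isets_sw Seqs_sw parseq_sw relevant_sw by simp

lemma Xi_sw: assumes "\<xi> \<in> XiStar2 H pl ifs" shows "(\<lambda>a b. \<xi> b a) \<in> XiStar1 H (sw \<circ> pl) ifs"
proof -
  have "\<xi> \<in> VSF H pl ifs" "\<forall>s1\<in>Seqs H pl ifs T1. \<xi> s1 None \<in> {0, 1}" using assms unfolding XiStar2_def by blast+
  moreover note VSF_sw[OF this(1)]
  ultimately show ?thesis unfolding XiStar1_def Seqs_sw by simp
qed

lemma fmap_sw: "fmap H (sw \<circ> pl) ifs (pair_pmf \<mu> (return_pmf \<pi>)) s2 s1 = fmap H pl ifs (pair_pmf (return_pmf \<pi>) \<mu>) s1 s2"
  unfolding fmap_def PlansOf_sw pmf_pair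
  by (simp add: sum.swap[of _ "PlansOf H pl ifs T2 s2"] mult.commute)

theorem mainTheorem6:
  fixes H :: "'a list set" and pl :: "'a list \<Rightarrow> plr" and ifs :: "'a list \<Rightarrow> 'i"
  assumes "wf_game H pl ifs"
  shows "(\<forall>\<xi> \<in> XiStar1 H pl ifs. \<exists>\<mu>1 \<pi>2.
            set_pmf \<mu>1 \<subseteq> Plans H pl ifs T1 \<and> \<pi>2 \<in> Plans H pl ifs T2 \<and>
            (\<forall>s1 s2. relevant H pl ifs s1 s2 \<longrightarrow>
               \<xi> s1 s2 = fmap H pl ifs (pair_pmf \<mu>1 (return_pmf \<pi>2)) s1 s2) \<and>
            (\<forall>s2 \<in> Seqs H pl ifs T2.
               \<xi> None s2 = (if \<pi>2 \<in> PlansOf H pl ifs T2 s2 then 1 else 0))) \<and>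
         (\<forall>\<xi> \<in> XiStar2 H pl ifs. \<exists>\<pi>1 \<mu>2.
            \<pi>1 \<in> Plans H pl ifs T1 \<and> set_pmf \<mu>2 \<subseteq> Plans H pl ifs T2 \<and>
            (\<forall>s1 s2. relevant H pl ifs s1 s2 \<longrightarrow>
               \<xi> s1 s2 = fmap H pl ifs (pair_pmf (return_pmf \<pi>1) \<mu>2) s1 s2))"
proof (intro conjI ballI)
  interpret g: game H pl ifs using assms by unfold_locales
  fix \<xi> assume "\<xi> \<in> XiStar1 H pl ifs"
  then show "\<exists>\<mu>1 \<pi>2.
            set_pmf \<mu>1 \<subseteq> Plans H pl ifs T1 \<and> \<pi>2 \<in> Plans H pl ifs T2 \<and>
            (\<forall>s1 s2. relevant H pl ifs s1 s2 \<longrightarrow>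
               \<xi> s1 s2 = fmap H pl ifs (pair_pmf \<mu>1 (return_pmf \<pi>2)) s1 s2) \<and>
            (\<forall>s2 \<in> Seqs H pl ifs T2.
               \<xi> None s2 = (if \<pi>2 \<in> PlansOf H pl ifs T2 s2 then 1 else 0))"
    by (rule g.part1)
next
  interpret g: game H "sw \<circ> pl" ifs using wf_sw[OF assms] by unfold_locales
  fix \<xi> assume "\<xi> \<in> XiStar2 H pl ifs"
  from g.part1[OF Xi_sw[OF this]] obtain \<mu>1 \<pi>2 where
    m: "set_pmf \<mu>1 \<subseteq> Plans H pl ifs T2" "\<pi>2 \<in> Plans H pl ifs T1"
    "\<forall>s1 s2. relevant H (sw \<circ> pl) ifs s1 s2 \<longrightarrow>
               \<xi> s2 s1 = fmap H (sw \<circ> pl) ifs (pair_pmf \<mu>1 (return_pmf \<pi>2)) s1 s2"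
    unfolding Plans_sw by auto
  have "\<forall>s1 s2. relevant H pl ifs s1 s2 \<longrightarrow> \<xi> s1 s2 = fmap H pl ifs (pair_pmf (return_pmf \<pi>2) \<mu>1) s1 s2"
    using m(3) by (simp add: relevant_sw fmap_sw)
  then show "\<exists>\<pi>1 \<mu>2.
            \<pi>1 \<in> Plans H pl ifs T1 \<and> set_pmf \<mu>2 \<subseteq> Plans H pl ifs T2 \<and>
            (\<forall>s1 s2. relevant H pl ifs s1 s2 \<longrightarrow>
               \<xi> s1 s2 = fmap H pl ifs (pair_pmf (return_pmf \<pi>1) \<mu>2) s1 s2)"
    using m(1,2) by blast
qed


end
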